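(* Let $B$ be a Batanin tree and $A$ a full $(n-1)$-sphere of $T\mathrm{Pos}(B)$ such that $\dim B<n$. Then for every weak $\omega$-category $\mathbb X=(X,\alpha)$ and every morphism of globular sets $f\colon\mathrm{Pos}(B)\to X$, the coherence cell $\mathrm{coh}^{\mathbb X}(B,A,f)$ is invertible.
   Context: Batanin trees are generated inductively: for every finite list $B_1,\dots,B_n$ ($n\ge0$) of Batanin trees there is a tree $[B_1,\dots,B_n]$; $\dim[B_1,\dots,B_n]=\max_i(\dim B_i+1)$ (and $\dim[\,]=0$). The suspension $\Sigma Y$ of a globular set has $0$-cells $v_-,v_+$ and $(\Sigma Y)_{n+1}=Y_n$, every $1$-cell going from $v_-$ to $v_+$. $\mathrm{Pos}([B_1,\dots,B_n])=\Sigma\mathrm{Pos}(B_1)\vee\cdots\vee\Sigma\mathrm{Pos}(B_n)$, the wedge gluing $v_+$ of each summand to $v_-$ of the next (a single point if $n=0$). Boundary trees: $\partial_0B=[\,]$, $\partial_{k+1}[B_1,\dots,B_n]=[\partial_kB_1,\dots,\partial_kB_n]$, with cosource/cotarget inclusions $s^B_k,t^B_k\colon\mathrm{Pos}(\partial_kB)\to\mathrm{Pos}(B)$ ($s^B_0$ picks the leftmost $0$-position, $t^B_0$ the rightmost, $s^B_{k+1}=\bigvee_i\Sigma s^{B_i}_k$, $t^B_{k+1}=\bigvee_i\Sigma t^{B_i}_k$). $T$ is the free weak $\omega$-category monad on globular sets (Batanin–Leinster), in the computad presentation of Dean et al.: for a globular set $Y$, the $n$-cells of $TY$ are generated by $\mathrm{var}\,y$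 ($y\in Y_n$) and $\mathrm{coh}(B,A,f)$ for a tree $B$ with $\dim B\le n$, a full $(n-1)$-sphere $A$ of $T\mathrm{Pos}(B)$ and a globular map $f\colon\mathrm{Pos}(B)\to TY$; the boundary of $\mathrm{coh}(B,A,f)$ is $A$ with $f$ substituted. An $m$-sphere is a pair of parallel $m$-cells (the unique $(-1)$-sphere is full). A cell of $T\mathrm{Pos}(P)$ covers $P$ if every position of $P$ occurs in it or its iterated boundaries. An $m$-sphere $(u,v)$ of $T\mathrm{Pos}(B)$ is full if $u=T(s^B_m)(u')$, $v=T(t^B_m)(v')$ for $m$-cells $u',v'$ of $T\mathrm{Pos}(\partial_mB)$ covering $\partial_mB$. A weak $\omega$-category is a $T$-algebra $(X,\alpha)$, and $\mathrm{coh}^{\mathbb X}(B,A,f)=\alpha(Tf(\mathrm{coh}(B,A,\mathrm{id})))$ where $\mathrm{id}$ sends each position $p$ to $\mathrm{var}\,p$. It has canonical identities $\mathrm{id}$ and binary compositions $\ast_n$. Invertibility is coinductive: the set $W$ of invertible cells is the largest set of positive-dimensional cells such that every $x\colon u\to v$ in $W$, of dimension $n+1$, admits a cell $\bar x\colon v\to u$ and cells $\eta_x\colon x\ast_n\bar x\to\mathrm{id}(u)$, $\varepsilon_x\colon\bar x\ast_n x\to\mathrm{id}(v)$ in $W$. *)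

theory Defs
  imports Main
begin

datatype tree = Node "tree list"

fun tdim :: "tree \<Rightarrow> nat" where
  "tdim (Node Bs) = Max (insert 0 (set (map (\<lambda>C. Suc (tdim C)) Bs)))"

fun bdry :: "nat \<Rightarrow> tree \<Rightarrow> tree" where
  "bdry 0 B = Node []"
| "bdry (Suc k) (Node Bs) = Node (map (bdry k) Bs)"

text \<open>The 0-positions of Node [B_0,...,B_(n-1)] are PZ 0, ..., PZ n (from left
to right); its (k+1)-positions are PS i p with i < n and p a k-position of B_i (the summand
Sigma Pos(B_i) of the wedge).\<close>
datatype pos = PZ nat | PS nat pos

inductive ispos :: "tree \<Rightarrow> pos \<Rightarrow> bool" where
  "j \<le> length Bs \<Longrightarrow> ispos (Node Bs) (PZ j)"
| "i < length Bs \<Longrightarrow> ispos (Bs ! i) p \<Longrightarrow> ispos (Node Bs) (PS i p)"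

definition poss :: "tree \<Rightarrow> pos set" where
  "poss B = {p. ispos B p}"

fun posdim :: "pos \<Rightarrow> nat" where
  "posdim (PZ j) = 0"
| "posdim (PS i p) = Suc (posdim p)"

fun possrc :: "pos \<Rightarrow> pos" where
  "possrc (PZ j) = PZ j"
| "possrc (PS i (PZ j)) = PZ i"
| "possrc (PS i (PS k q)) = PS i (possrc (PS k q))"

fun postgt :: "pos \<Rightarrow> pos" where
  "postgt (PZ j) = PZ j"
| "postgt (PS i (PZ j)) = PZ (Suc i)"
| "postgt (PS i (PS k q)) = PS i (postgt (PS k q))"

text \<open>Cosource and cotarget inclusions s^B_k, t^B_k : Pos(bdry k B) \<rightarrow> Pos(B).\<close>
fun ssrc :: "nat \<Rightarrow> tree \<Rightarrow> pos \<Rightarrow> pos" where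
  "ssrc 0 B p = PZ 0"
| "ssrc (Suc k) (Node Bs) (PZ j) = PZ j"
| "ssrc (Suc k) (Node Bs) (PS i p) = PS i (ssrc k (Bs ! i) p)"

fun ttgt :: "nat \<Rightarrow> tree \<Rightarrow> pos \<Rightarrow> pos" where
  "ttgt 0 (Node Bs) p = PZ (length Bs)"
| "ttgt (Suc k) (Node Bs) (PZ j) = PZ j"
| "ttgt (Suc k) (Node Bs) (PS i p) = PS i (ttgt k (Bs ! i) p)"

record 'a gset =
  cells :: "nat \<Rightarrow> 'a set"
  src :: "'a \<Rightarrow> 'a"
  tgt :: "'a \<Rightarrow> 'a"

definition globular :: "'a gset \<Rightarrow> bool" where
  "globular G \<longleftrightarrow>
     (\<forall>m n. m \<noteq> n \<longrightarrow> cells G m \<inter> cells G n = {}) \<and>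
     (\<forall>n. \<forall>x\<in>cells G (Suc n). src G x \<in> cells G n \<and> tgt G x \<in> cells G n) \<and>
     (\<forall>n. \<forall>x\<in>cells G (Suc (Suc n)).
        src G (src G x) = src G (tgt G x) \<and> tgt G (src G x) = tgt G (tgt G x))"

definition gmap :: "'a gset \<Rightarrow> 'b gset \<Rightarrow> ('a \<Rightarrow> 'b) \<Rightarrow> bool" where
  "gmap G H f \<longleftrightarrow>
     (\<forall>n. \<forall>x\<in>cells G n. f x \<in> cells H n) \<and>
     (\<forall>n. \<forall>x\<in>cells G (Suc n). f (src G x) = src H (f x) \<and> f (tgt G x) = tgt H (f x))"

definition posG :: "tree \<Rightarrow> pos gset" where
  "posG B = \<lparr>cells = (\<lambda>n. {p \<in> poss B. posdim p = n}), src = possrc, tgt = postgt\<rparr>"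

text \<open>Coh B A g: B the tree, A the sphere (None = the (-1)-sphere, Some (u,v) an m-sphere
of T Pos(B)), g the substitution, a partial map defined exactly on the positions of B.\<close>
datatype ptm = PVar pos | PCoh tree "(ptm \<times> ptm) option" "pos \<Rightarrow> ptm option"

datatype 'a tm = Var 'a | Coh tree "(ptm \<times> ptm) option" "pos \<Rightarrow> 'a tm option"

primrec psubst :: "ptm \<Rightarrow> (pos \<Rightarrow> ptm) \<Rightarrow> ptm" where
  "psubst (PVar p) \<sigma> = \<sigma> p"
| "psubst (PCoh B A g) \<sigma> = PCoh B A (map_option (\<lambda>t. psubst t \<sigma>) \<circ> g)"

definition pmap :: "(pos \<Rightarrow> pos) \<Rightarrow> ptm \<Rightarrow> ptm" where
  "pmap f t = psubst t (\<lambda>p. PVar (f p))"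

fun psrc :: "ptm \<Rightarrow> ptm" where
  "psrc (PVar p) = PVar (possrc p)"
| "psrc (PCoh B (Some (u, v)) g) = psubst u (\<lambda>p. the (g p))"
| "psrc (PCoh B None g) = PCoh B None g"

fun ptgt :: "ptm \<Rightarrow> ptm" where
  "ptgt (PVar p) = PVar (postgt p)"
| "ptgt (PCoh B (Some (u, v)) g) = psubst v (\<lambda>p. the (g p))"
| "ptgt (PCoh B None g) = PCoh B None g"

primrec occ :: "ptm \<Rightarrow> pos set" where
  "occ (PVar p) = {p}"
| "occ (PCoh B A g) = \<Union> (\<Union> (set_option ` range (map_option occ \<circ> g)))"

fun pbdries :: "nat \<Rightarrow> ptm \<Rightarrow> ptm set" where
  "pbdries 0 u = {u}"
| "pbdries (Suc k) u = {u} \<union> pbdries k (psrc u) \<union> pbdries k (ptgt u)"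

definition covers :: "tree \<Rightarrow> nat \<Rightarrow> ptm \<Rightarrow> bool" where
  "covers P m u \<longleftrightarrow> poss P \<subseteq> \<Union> (occ ` pbdries m u)"

text \<open>fullsph W B n A: A is a full (n-1)-sphere of T Pos(B), where W B m t means that t is an
m-cell of T Pos(B).\<close>
definition fullsph :: "(tree \<Rightarrow> nat \<Rightarrow> ptm \<Rightarrow> bool) \<Rightarrow> tree \<Rightarrow> nat \<Rightarrow> (ptm \<times> ptm) option \<Rightarrow> bool" where
  "fullsph W B n A \<longleftrightarrow>
     (n = 0 \<and> A = None) \<or>
     (\<exists>m u v u' v'. n = Suc m \<and> A = Some (u, v) \<and>
        W B m u \<and> W B m v \<and> (0 < m \<longrightarrow> psrc u = psrc v \<and> ptgt u = ptgt v) \<and>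
        W (bdry m B) m u' \<and> W (bdry m B) m v' \<and>
        covers (bdry m B) m u' \<and> covers (bdry m B) m v' \<and>
        u = pmap (ssrc m B) u' \<and> v = pmap (ttgt m B) v')"

lemma fullsph_mono[mono]:
  "(\<And>B m t. W B m t \<longrightarrow> W' B m t) \<Longrightarrow> fullsph W B n A \<longrightarrow> fullsph W' B n A"
  unfolding fullsph_def by blast

text \<open>g is a globular map Pos(B) \<rightarrow> Z, where W m t means t is an m-cell of Z.\<close>
definition pglob :: "(nat \<Rightarrow> 't \<Rightarrow> bool) \<Rightarrow> ('t \<Rightarrow> 't) \<Rightarrow> ('t \<Rightarrow> 't) \<Rightarrow> tree \<Rightarrow> (pos \<Rightarrow> 't option) \<Rightarrow> bool" where
  "pglob W sr tg B g \<longleftrightarrow> dom g = poss B \<and>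
     (\<forall>p\<in>poss B. W (posdim p) (the (g p)) \<and>
        (0 < posdim p \<longrightarrow> sr (the (g p)) = the (g (possrc p)) \<and> tg (the (g p)) = the (g (postgt p))))"

lemma pglob_mono[mono]:
  "(\<And>m t. W m t \<longrightarrow> W' m t) \<Longrightarrow> pglob W sr tg B g \<longrightarrow> pglob W' sr tg B g"
  unfolding pglob_def by blast

text \<open>wfp B n t: t is an n-cell of T Pos(B).\<close>
inductive wfp :: "tree \<Rightarrow> nat \<Rightarrow> ptm \<Rightarrow> bool" where
  wfp_var: "p \<in> poss B \<Longrightarrow> posdim p = n \<Longrightarrow> wfp B n (PVar p)"
| wfp_coh: "tdim B' \<le> n \<Longrightarrow> fullsph wfp B' n A \<Longrightarrow> pglob (wfp B) psrc ptgt B' g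
            \<Longrightarrow> wfp B n (PCoh B' A g)"

abbreviation full_sphere :: "tree \<Rightarrow> nat \<Rightarrow> (ptm \<times> ptm) option \<Rightarrow> bool" where
  "full_sphere B n A \<equiv> fullsph wfp B n A"

primrec psub :: "ptm \<Rightarrow> (pos \<Rightarrow> 'a tm option) \<Rightarrow> 'a tm" where
  "psub (PVar p) g = the (g p)"
| "psub (PCoh B A h) g = Coh B A (map_option (\<lambda>t. psub t g) \<circ> h)"

fun tsrc :: "'a gset \<Rightarrow> 'a tm \<Rightarrow> 'a tm" where
  "tsrc Y (Var y) = Var (src Y y)"
| "tsrc Y (Coh B (Some (u, v)) g) = psub u g"
| "tsrc Y (Coh B None g) = Coh B None g"

fun ttgt_tm :: "'a gset \<Rightarrow> 'a tm \<Rightarrow> 'a tm" where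
  "ttgt_tm Y (Var y) = Var (tgt Y y)"
| "ttgt_tm Y (Coh B (Some (u, v)) g) = psub v g"
| "ttgt_tm Y (Coh B None g) = Coh B None g"

text \<open>wf Y n t: t is an n-cell of T Y.\<close>
inductive wf :: "'a gset \<Rightarrow> nat \<Rightarrow> 'a tm \<Rightarrow> bool" for Y where
  wf_var: "y \<in> cells Y n \<Longrightarrow> wf Y n (Var y)"
| wf_coh: "tdim B \<le> n \<Longrightarrow> full_sphere B n A \<Longrightarrow> pglob (wf Y) (tsrc Y) (ttgt_tm Y) B g
            \<Longrightarrow> wf Y n (Coh B A g)"

definition TG :: "'a gset \<Rightarrow> 'a tm gset" where
  "TG Y = \<lparr>cells = (\<lambda>n. {t. wf Y n t}), src = tsrc Y, tgt = ttgt_tm Y\<rparr>"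

primrec join :: "'a tm tm \<Rightarrow> 'a tm" where
  "join (Var t) = t"
| "join (Coh B A g) = Coh B A (map_option join \<circ> g)"

definition walg :: "'a gset \<Rightarrow> ('a tm \<Rightarrow> 'a) \<Rightarrow> bool" where
  "walg X \<alpha> \<longleftrightarrow> globular X \<and> gmap (TG X) X \<alpha> \<and>
     (\<forall>n. \<forall>x\<in>cells X n. \<alpha> (Var x) = x) \<and>
     (\<forall>n. \<forall>t\<in>cells (TG (TG X)) n. \<alpha> (join t) = \<alpha> (map_tm \<alpha> t))"

definition idsub :: "tree \<Rightarrow> pos \<Rightarrow> pos tm option" where
  "idsub B p = (if p \<in> poss B then Some (Var p) else None)"

text \<open>coh^X(B,A,f) = alpha (T f (coh(B,A,id))).\<close>
definition cohX :: "('a tm \<Rightarrow> 'a) \<Rightarrow> tree \<Rightarrow> (ptm \<times> ptm) option \<Rightarrow> (pos \<Rightarrow> 'a) \<Rightarrow> 'a" where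
  "cohX \<alpha> B A f = \<alpha> (map_tm f (Coh B A (idsub B)))"

text \<open>Disk tree D_n and the tree of two (n+1)-cells composable along an n-cell.\<close>
fun disk :: "nat \<Rightarrow> tree" where
  "disk 0 = Node []"
| "disk (Suc n) = Node [disk n]"

fun comptree :: "nat \<Rightarrow> tree" where
  "comptree 0 = Node [Node [], Node []]"
| "comptree (Suc n) = Node [comptree n]"

fun top :: "nat \<Rightarrow> pos" where
  "top 0 = PZ 0"
| "top (Suc n) = PS 0 (top n)"

fun pinds :: "pos \<Rightarrow> nat list" where
  "pinds (PZ j) = [j]"
| "pinds (PS i p) = i # pinds p"

text \<open>The globular map Pos(D_n) \<rightarrow> X classifying an n-cell x.\<close>
definition diskmap :: "'a gset \<Rightarrow> nat \<Rightarrow> 'a \<Rightarrow> pos \<Rightarrow> 'a" where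
  "diskmap X n x p = (let d = posdim p in
     if d = n then x
     else if last (pinds p) = 0 then (src X ^^ (n - d)) x else (tgt X ^^ (n - d)) x)"

text \<open>The globular map Pos(comptree n) \<rightarrow> X classifying (n+1)-cells x, y with tgt x = src y.\<close>
definition compmap :: "'a gset \<Rightarrow> nat \<Rightarrow> 'a \<Rightarrow> 'a \<Rightarrow> pos \<Rightarrow> 'a" where
  "compmap X n x y p = (let d = posdim p; j = last (pinds p) in
     if d = Suc n then (if pinds p ! n = 0 then x else y)
     else if d = n then (if j = 0 then src X x else if j = 1 then tgt X x else tgt X y)
     else if j = 0 then (src X ^^ (Suc n - d)) x else (tgt X ^^ (Suc n - d)) x)"

definition idc :: "'a gset \<Rightarrow> ('a tm \<Rightarrow> 'a) \<Rightarrow> nat \<Rightarrow> 'a \<Rightarrow> 'a" where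
  "idc X \<alpha> n u = cohX \<alpha> (disk n) (Some (PVar (top n), PVar (top n))) (diskmap X n u)"

text \<open>x *_n y for (n+1)-cells x, y with tgt x = src y (diagrammatic order).\<close>
definition comp :: "'a gset \<Rightarrow> ('a tm \<Rightarrow> 'a) \<Rightarrow> nat \<Rightarrow> 'a \<Rightarrow> 'a \<Rightarrow> 'a" where
  "comp X \<alpha> n x y = cohX \<alpha> (comptree n)
      (Some (PVar (ssrc n (comptree n) (top n)), PVar (ttgt n (comptree n) (top n))))
      (compmap X n x y)"

coinductive invertible :: "'a gset \<Rightarrow> ('a tm \<Rightarrow> 'a) \<Rightarrow> 'a \<Rightarrow> bool" for X \<alpha> where
  "x \<in> cells X (Suc n) \<Longrightarrow> xb \<in> cells X (Suc n) \<Longrightarrow>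
   src X xb = tgt X x \<Longrightarrow> tgt X xb = src X x \<Longrightarrow>
   \<eta> \<in> cells X (Suc (Suc n)) \<Longrightarrow> \<epsilon> \<in> cells X (Suc (Suc n)) \<Longrightarrow>
   src X \<eta> = comp X \<alpha> n x xb \<Longrightarrow> tgt X \<eta> = idc X \<alpha> n (src X x) \<Longrightarrow>
   src X \<epsilon> = comp X \<alpha> n xb x \<Longrightarrow> tgt X \<epsilon> = idc X \<alpha> n (tgt X x) \<Longrightarrow>
   invertible X \<alpha> \<eta> \<Longrightarrow> invertible X \<alpha> \<epsilon> \<Longrightarrow> invertible X \<alpha> x"

end

theory Submission
  imports Defs
begin



lemma tdim_le: "tdim (Node Bs) \<le> k \<longleftrightarrow> (\<forall>C\<in>set Bs. Suc (tdim C) \<le> k)"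
  by (simp add: Max_le_iff)

lemma tdim_ge: "C \<in> set Bs \<Longrightarrow> Suc (tdim C) \<le> tdim (Node Bs)"
  using tdim_le by blast

lemma tdim_eq0[simp]: "tdim (Node Bs) = 0 \<longleftrightarrow> Bs = []"
  using tdim_le[of Bs 0] by (cases Bs) auto

declare tdim.simps[simp del]

lemma bdry_id: "tdim B \<le> k \<Longrightarrow> bdry k B = B"
proof (induction k arbitrary: B)
  case 0
  then show ?case by (cases B) (auto simp: tdim_le)
next
  case (Suc k)
  obtain Bs where B: "B = Node Bs" by (cases B)
  have "\<forall>C\<in>set Bs. bdry k C = C" using Suc B by (auto simp: tdim_le)
  then show ?case using B by (simp add: map_idI)
qed

lemma ispos_Node_iff: "ispos (Node Bs) p \<longleftrightarrow> (\<exists>j. p = PZ j \<and> j \<le> length Bs) \<or>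
   (\<exists>i q. p = PS i q \<and> i < length Bs \<and> ispos (Bs ! i) q)"
  by (auto elim: ispos.cases intro: ispos.intros)

lemma ssrc_id: "tdim B \<le> k \<Longrightarrow> ispos B p \<Longrightarrow> ssrc k B p = p \<and> ttgt k B p = p"
proof (induction k arbitrary: B p)
  case 0
  then obtain Bs where B: "B = Node Bs" by (cases B)
  with 0 have "Bs = []" by (cases Bs) (auto simp: tdim_le)
  with 0 B show ?case by (auto simp: ispos_Node_iff)
next
  case (Suc k)
  obtain Bs where B: "B = Node Bs" by (cases B)
  show ?case
  proof (cases p)
    case (PZ j) then show ?thesis using B by simp
  next
    case (PS i q)
    with Suc.prems B have i: "i < length Bs" "ispos (Bs ! i) q" by (auto simp: ispos_Node_iff)
    then have "tdim (Bs ! i) \<le> k" using Suc.prems B by (auto simp: tdim_le)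
    then show ?thesis using Suc.IH[OF _ i(2)] PS B by simp
  qed
qed

lemma possrc_ispos: "ispos B p \<Longrightarrow> 0 < posdim p \<Longrightarrow>
   ispos B (possrc p) \<and> ispos B (postgt p) \<and> posdim (possrc p) = posdim p - 1 \<and> posdim (postgt p) = posdim p - 1"
proof (induction rule: ispos.induct)
  case (1 j Bs) then show ?case by simp
next
  case (2 i Bs p)
  show ?case
  proof (cases p)
    case (PZ j)
    then show ?thesis using 2 by (auto intro: ispos.intros)
  next
    case (PS k q)
    then show ?thesis using 2 by (auto intro: ispos.intros)
  qed
qed

lemma pos_glob: "2 \<le> posdim p \<Longrightarrow> possrc (possrc p) = possrc (postgt p) \<and> postgt (possrc p) = postgt (postgt p)"
proof (induction p rule: possrc.induct)
  case (3 i k q)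
  then show ?case by (cases q) auto
qed auto




lemma occ_PCoh[simp]: "p \<in> occ (PCoh B A g) \<longleftrightarrow> (\<exists>q t. g q = Some t \<and> p \<in> occ t)"
  by (auto simp: split: option.splits)

lemma psubst_cong: "(\<And>p. p \<in> occ u \<Longrightarrow> \<sigma> p = \<sigma>' p) \<Longrightarrow> psubst u \<sigma> = psubst u \<sigma>'"
proof (induction u)
  case (PVar x) then show ?case by simp
next
  case (PCoh B A g)
  have "map_option (\<lambda>t. psubst t \<sigma>) (g q) = map_option (\<lambda>t. psubst t \<sigma>') (g q)" for q
  proof (cases "g q")
    case (Some t)
    then have "psubst t \<sigma> = psubst t \<sigma>'"
      using PCoh.IH(3)[OF rangeI[of g q], of t] PCoh.prems Some by (metis occ_PCoh option.set_intros)
    then show ?thesis using Some by simp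
  qed simp
  then show ?case by (auto simp: fun_eq_iff)
qed

lemma psubst_PVar[simp]: "psubst u PVar = u"
proof (induction u)
  case (PCoh B A g)
  have "map_option (\<lambda>t. psubst t PVar) (g q) = g q" for q
    using PCoh.IH(3)[OF rangeI[of g q]] by (cases "g q") auto
  then show ?case by (auto simp: fun_eq_iff)
qed simp

lemma psubst_comp: "psubst (psubst c \<sigma>) \<tau> = psubst c (\<lambda>p. psubst (\<sigma> p) \<tau>)"
proof (induction c)
  case (PCoh B A g)
  have "map_option (\<lambda>t. psubst t \<tau>) (map_option (\<lambda>t. psubst t \<sigma>) (g q)) =
        map_option (\<lambda>t. psubst t (\<lambda>p. psubst (\<sigma> p) \<tau>)) (g q)" for q
    using PCoh.IH(3)[OF rangeI[of g q]] by (cases "g q") auto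
  then show ?case by (auto simp: fun_eq_iff)
qed simp

lemma psub_cong: "(\<And>p. p \<in> occ u \<Longrightarrow> F p = F' p) \<Longrightarrow> psub u F = psub u F'"
proof (induction u)
  case (PVar x) then show ?case by simp
next
  case (PCoh B A g)
  have "map_option (\<lambda>t. psub t F) (g q) = map_option (\<lambda>t. psub t F') (g q)" for q
  proof (cases "g q")
    case (Some t)
    then have "psub t F = psub t F'"
      using PCoh.IH(3)[OF rangeI[of g q], of t] PCoh.prems Some by (metis occ_PCoh option.set_intros)
    then show ?thesis using Some by simp
  qed simp
  then show ?case by (auto simp: fun_eq_iff)
qed

lemma psub_psubst: "psub (psubst c \<sigma>) F = psub c (\<lambda>p. Some (psub (\<sigma> p) F))"
proof (induction c)
  case (PCoh B A g)
  have "map_option (\<lambda>t. psub t F) (map_option (\<lambda>t. psubst t \<sigma>) (g q)) =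
        map_option (\<lambda>t. psub t (\<lambda>p. Some (psub (\<sigma> p) F))) (g q)" for q
    using PCoh.IH(3)[OF rangeI[of g q]] by (cases "g q") auto
  then show ?case by (auto simp: fun_eq_iff)
qed simp

lemma occ_wfp: "wfp B m u \<Longrightarrow> occ u \<subseteq> poss B"
proof (induction rule: wfp.induct)
  case (wfp_var p B n) then show ?case by simp
next
  case (wfp_coh B' n A B g)
  show ?case
  proof
    fix p assume "p \<in> occ (PCoh B' A g)"
    then obtain q t where "g q = Some t" "p \<in> occ t" by auto
    moreover have "q \<in> poss B'" using \<open>g q = Some t\<close> wfp_coh unfolding pglob_def by auto
    ultimately show "p \<in> poss B" using wfp_coh unfolding pglob_def by force
  qed
qed

lemma psubst_id_wfp: "wfp B m u \<Longrightarrow> (\<And>p. p \<in> poss B \<Longrightarrow> \<sigma> p = PVar p) \<Longrightarrow> psubst u \<sigma> = u"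
proof -
  assume "wfp B m u" "\<And>p. p \<in> poss B \<Longrightarrow> \<sigma> p = PVar p"
  then have "psubst u \<sigma> = psubst u PVar" using occ_wfp by (intro psubst_cong) blast
  then show ?thesis by simp
qed




lemma fullsph_Suc: "fullsph W B (Suc k) A \<Longrightarrow> \<exists>c d. A = Some (c, d) \<and> W B k c \<and> W B k d \<and>
   (0 < k \<longrightarrow> psrc c = psrc d \<and> ptgt c = ptgt d)"
  unfolding fullsph_def by auto

lemma wfp_PVar_iff: "wfp B k (PVar p) \<longleftrightarrow> p \<in> poss B \<and> posdim p = k"
  by (auto elim: wfp.cases intro: wfp.intros)

lemma wfp_PCoh_iff: "wfp B k (PCoh B' A g) \<longleftrightarrow> tdim B' \<le> k \<and> full_sphere B' k A \<and> pglob (wfp B) psrc ptgt B' g"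
  by (auto elim: wfp.cases intro: wfp.intros)

definition sglob :: "tree \<Rightarrow> (pos \<Rightarrow> ptm) \<Rightarrow> bool" where
  "sglob B \<sigma> \<longleftrightarrow> (\<forall>p\<in>poss B. 0 < posdim p \<longrightarrow> psrc (\<sigma> p) = \<sigma> (possrc p) \<and> ptgt (\<sigma> p) = \<sigma> (postgt p))"

lemma pglob_sglob: "pglob W psrc ptgt B g \<Longrightarrow> sglob B (\<lambda>p. the (g p))"
  unfolding pglob_def sglob_def by auto

lemma poss_iff: "p \<in> poss B \<longleftrightarrow> ispos B p" by (simp add: poss_def)

lemma pglobD: "pglob W sr tg B g \<Longrightarrow> p \<in> poss B \<Longrightarrow> W (posdim p) (the (g p)) \<and>
   (0 < posdim p \<longrightarrow> sr (the (g p)) = the (g (possrc p)) \<and> tg (the (g p)) = the (g (postgt p)))"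
  unfolding pglob_def by blast

lemma pglob_domD: "pglob W sr tg B g \<Longrightarrow> dom g = poss B"
  unfolding pglob_def by blast

lemma fullsph_weaken: "fullsph (\<lambda>x1 x2 x3. W x1 x2 x3 \<and> P x1 x2 x3) B n A \<Longrightarrow> fullsph W B n A"
  by (rule fullsph_mono[THEN mp]) auto

lemma pglob_dom: "pglob W sr tg B g \<Longrightarrow> p \<in> poss B \<Longrightarrow> \<exists>t. g p = Some t"
  unfolding pglob_def by auto

lemma wfp_PCoh_Suc: "wfp B (Suc k) (PCoh B' A g) \<Longrightarrow> \<exists>c d. A = Some (c, d) \<and> wfp B' k c \<and> wfp B' k d \<and>
   (0 < k \<longrightarrow> psrc c = psrc d \<and> ptgt c = ptgt d) \<and> pglob (wfp B) psrc ptgt B' g \<and> tdim B' \<le> Suc k"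
proof -
  assume "wfp B (Suc k) (PCoh B' A g)"
  then have "tdim B' \<le> Suc k" "full_sphere B' (Suc k) A" "pglob (wfp B) psrc ptgt B' g"
    by (simp_all add: wfp_PCoh_iff)
  with fullsph_Suc[OF this(2)] show ?thesis by blast
qed

lemma C3: assumes "wfp B (Suc k) t" "sglob B \<sigma>"
  shows "psrc (psubst t \<sigma>) = psubst (psrc t) \<sigma> \<and> ptgt (psubst t \<sigma>) = psubst (ptgt t) \<sigma>"
proof (cases t)
  case (PVar p)
  then show ?thesis using assms by (auto simp: wfp_PVar_iff sglob_def)
next
  case (PCoh B' A h)
  with assms obtain c d where A: "A = Some (c, d)" "wfp B' k c" "wfp B' k d" and
    h: "pglob (wfp B) psrc ptgt B' h"
    by (blast dest: wfp_PCoh_Suc)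
  have occ: "occ c \<subseteq> poss B'" "occ d \<subseteq> poss B'" using A occ_wfp by auto
  have "psrc (psubst t \<sigma>) = psubst c (\<lambda>p. the (map_option (\<lambda>t. psubst t \<sigma>) (h p)))"
    using PCoh A by simp
  also have "\<dots> = psubst c (\<lambda>p. psubst (the (h p)) \<sigma>)"
    using occ pglob_dom[OF h] by (intro psubst_cong) force
  also have "\<dots> = psubst (psrc t) \<sigma>" using PCoh A by (simp add: psubst_comp)
  finally have 1: "psrc (psubst t \<sigma>) = psubst (psrc t) \<sigma>" .
  have "ptgt (psubst t \<sigma>) = psubst d (\<lambda>p. the (map_option (\<lambda>t. psubst t \<sigma>) (h p)))"
    using PCoh A by simp
  also have "\<dots> = psubst d (\<lambda>p. psubst (the (h p)) \<sigma>)"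
    using occ pglob_dom[OF h] by (intro psubst_cong) force
  also have "\<dots> = psubst (ptgt t) \<sigma>" using PCoh A by (simp add: psubst_comp)
  finally show ?thesis using 1 by simp
qed

lemma S_lemma: "wfp B' k c \<Longrightarrow> pglob (wfp B) psrc ptgt B' g \<Longrightarrow> wfp B k (psubst c (\<lambda>p. the (g p)))"
proof (induction B' k c arbitrary: B g rule: wfp.induct)
  case (wfp_var p B' n)
  then show ?case unfolding pglob_def by auto
next
  case (wfp_coh B'' n A B' h)
  let ?\<sigma> = "\<lambda>p. the (g p)"
  have sg: "sglob B' ?\<sigma>" using pglob_sglob[OF wfp_coh.prems] .
  have fs: "full_sphere B'' n A" using fullsph_weaken[OF wfp_coh(2)] .
  have hd: "dom h = poss B''" using pglob_domD[OF wfp_coh(3)] .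
  have "pglob (wfp B) psrc ptgt B'' (map_option (\<lambda>t. psubst t ?\<sigma>) \<circ> h)"
    unfolding pglob_def
  proof (intro conjI ballI impI)
    show "dom (map_option (\<lambda>t. psubst t ?\<sigma>) \<circ> h) = poss B''" using hd by auto
  next
    fix p assume p: "p \<in> poss B''"
    then obtain t where t: "h p = Some t" using hd by auto
    have tw: "wfp B' (posdim p) t" "\<forall>B g. pglob (wfp B) psrc ptgt B' g \<longrightarrow> wfp B (posdim p) (psubst t (\<lambda>p. the (g p)))"
      using pglobD[OF wfp_coh(3) p] t by simp_all
    show "wfp B (posdim p) (the ((map_option (\<lambda>t. psubst t ?\<sigma>) \<circ> h) p))"
      using tw(2) wfp_coh.prems t by simp
    assume "0 < posdim p"
    then obtain k where k: "posdim p = Suc k" by (cases "posdim p") auto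
    have ps: "psrc t = the (h (possrc p))" "ptgt t = the (h (postgt p))"
      using pglobD[OF wfp_coh(3) p] t k by simp_all
    have sp: "possrc p \<in> poss B''" "postgt p \<in> poss B''" using possrc_ispos[of B'' p] p k by (auto simp: poss_iff)
    then obtain t1 t2 where t12: "h (possrc p) = Some t1" "h (postgt p) = Some t2" using hd by blast
    show "psrc (the ((map_option (\<lambda>t. psubst t ?\<sigma>) \<circ> h) p)) = the ((map_option (\<lambda>t. psubst t ?\<sigma>) \<circ> h) (possrc p))"
      using C3[OF tw(1)[unfolded k] sg] ps t t12 by simp
    show "ptgt (the ((map_option (\<lambda>t. psubst t ?\<sigma>) \<circ> h) p)) = the ((map_option (\<lambda>t. psubst t ?\<sigma>) \<circ> h) (postgt p))"
      using C3[OF tw(1)[unfolded k] sg] ps t t12 by simp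
  qed
  then show ?case using wfp_coh(1) fs by (simp add: wfp_PCoh_iff)
qed

lemma C2: "wfp B (Suc k) u \<Longrightarrow> wfp B k (psrc u) \<and> wfp B k (ptgt u)"
proof (cases u)
  case (PVar p)
  assume "wfp B (Suc k) u"
  then show ?thesis using PVar possrc_ispos[of B p] by (auto simp: wfp_PVar_iff poss_iff)
next
  case (PCoh B' A g)
  assume "wfp B (Suc k) u"
  with PCoh obtain c d where A: "A = Some (c, d)" "wfp B' k c" "wfp B' k d" and
    g: "pglob (wfp B) psrc ptgt B' g"
    by (blast dest: wfp_PCoh_Suc)
  then show ?thesis using PCoh S_lemma by simp
qed

lemma G_lemma: "wfp B (Suc (Suc k)) u \<Longrightarrow> psrc (psrc u) = psrc (ptgt u) \<and> ptgt (psrc u) = ptgt (ptgt u)"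
proof (cases u)
  case (PVar p)
  assume "wfp B (Suc (Suc k)) u"
  then show ?thesis using PVar pos_glob[of p] by (auto simp: wfp_PVar_iff)
next
  case (PCoh B' A g)
  assume "wfp B (Suc (Suc k)) u"
  with PCoh obtain c d where A: "A = Some (c, d)" "wfp B' (Suc k) c" "wfp B' (Suc k) d"
    "psrc c = psrc d" "ptgt c = ptgt d" and
    g: "pglob (wfp B) psrc ptgt B' g"
    by (blast dest: wfp_PCoh_Suc)
  then show ?thesis using PCoh C3[OF A(2) pglob_sglob[OF g]] C3[OF A(3) pglob_sglob[OF g]] by simp
qed




definition Fb :: "(pos \<Rightarrow> 'a) \<Rightarrow> tree \<Rightarrow> pos \<Rightarrow> 'a tm option" where
  "Fb f B = (\<lambda>p. if p \<in> poss B then Some (Var (f p)) else None)"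

definition idp :: "tree \<Rightarrow> pos \<Rightarrow> ptm option" where
  "idp B = (\<lambda>p. if p \<in> poss B then Some (PVar p) else None)"

lemma gmap_posG: "gmap (posG B) X f \<longleftrightarrow>
   (\<forall>p\<in>poss B. f p \<in> cells X (posdim p)) \<and>
   (\<forall>p\<in>poss B. 0 < posdim p \<longrightarrow> f (possrc p) = src X (f p) \<and> f (postgt p) = tgt X (f p))"
proof
  assume H: "gmap (posG B) X f"
  have 1: "\<forall>p\<in>poss B. f p \<in> cells X (posdim p)"
  proof
    fix p assume "p \<in> poss B"
    then show "f p \<in> cells X (posdim p)" using H unfolding gmap_def posG_def by simp
  qed
  have 2: "\<forall>p\<in>poss B. 0 < posdim p \<longrightarrow> f (possrc p) = src X (f p) \<and> f (postgt p) = tgt X (f p)"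
  proof (intro ballI impI)
    fix p assume p: "p \<in> poss B" "0 < posdim p"
    then obtain m where m: "posdim p = Suc m" by (cases "posdim p") auto
    have "p \<in> cells (posG B) (Suc m)" using p m by (simp add: posG_def)
    then show "f (possrc p) = src X (f p) \<and> f (postgt p) = tgt X (f p)"
      using H unfolding gmap_def by (simp add: posG_def)
  qed
  show "(\<forall>p\<in>poss B. f p \<in> cells X (posdim p)) \<and>
   (\<forall>p\<in>poss B. 0 < posdim p \<longrightarrow> f (possrc p) = src X (f p) \<and> f (postgt p) = tgt X (f p))"
    using 1 2 by blast
next
  assume H: "(\<forall>p\<in>poss B. f p \<in> cells X (posdim p)) \<and>
   (\<forall>p\<in>poss B. 0 < posdim p \<longrightarrow> f (possrc p) = src X (f p) \<and> f (postgt p) = tgt X (f p))"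
  show "gmap (posG B) X f"
    unfolding gmap_def
  proof (intro conjI allI ballI)
    fix n x assume "x \<in> cells (posG B) n"
    then show "f x \<in> cells X n" using H by (auto simp: posG_def)
  next
    fix n x assume x: "x \<in> cells (posG B) (Suc n)"
    then have "x \<in> poss B" "0 < posdim x" by (auto simp: posG_def)
    then show "f (src (posG B) x) = src X (f x)" "f (tgt (posG B) x) = tgt X (f x)"
      using H by (simp_all add: posG_def)
  qed
qed

lemma psub_idp: "psub (PCoh B A (idp B)) (Fb f B) = Coh B A (Fb f B)"
  by (auto simp: idp_def Fb_def fun_eq_iff)

lemma map_tm_coh: "map_tm f (Coh B A (idsub B)) = Coh B A (Fb f B)"
  by (auto simp: idsub_def Fb_def fun_eq_iff)

lemma C1: assumes "wfp B (Suc k) u" "gmap (posG B) X f"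
  shows "tsrc X (psub u (Fb f B)) = psub (psrc u) (Fb f B) \<and> ttgt_tm X (psub u (Fb f B)) = psub (ptgt u) (Fb f B)"
proof (cases u)
  case (PVar p)
  then have p: "p \<in> poss B" "posdim p = Suc k" using assms by (auto simp: wfp_PVar_iff)
  then have "possrc p \<in> poss B" "postgt p \<in> poss B" using possrc_ispos[of B p] by (auto simp: poss_iff)
  then show ?thesis using PVar p assms(2) by (auto simp: gmap_posG Fb_def)
next
  case (PCoh B' A h)
  with assms obtain c d where A: "A = Some (c, d)" "wfp B' k c" "wfp B' k d" and
    h: "pglob (wfp B) psrc ptgt B' h"
    by (blast dest: wfp_PCoh_Suc)
  have occ: "occ c \<subseteq> poss B'" "occ d \<subseteq> poss B'" using A occ_wfp by auto
  have "tsrc X (psub u (Fb f B)) = psub c (map_option (\<lambda>t. psub t (Fb f B)) \<circ> h)"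
    using PCoh A by simp
  also have "\<dots> = psub c (\<lambda>p. Some (psub (the (h p)) (Fb f B)))"
    using occ pglob_dom[OF h] by (intro psub_cong) force
  also have "\<dots> = psub (psrc u) (Fb f B)" using PCoh A by (simp add: psub_psubst)
  finally have 1: "tsrc X (psub u (Fb f B)) = psub (psrc u) (Fb f B)" .
  have "ttgt_tm X (psub u (Fb f B)) = psub d (map_option (\<lambda>t. psub t (Fb f B)) \<circ> h)"
    using PCoh A by simp
  also have "\<dots> = psub d (\<lambda>p. Some (psub (the (h p)) (Fb f B)))"
    using occ pglob_dom[OF h] by (intro psub_cong) force
  also have "\<dots> = psub (ptgt u) (Fb f B)" using PCoh A by (simp add: psub_psubst)
  finally show ?thesis using 1 by simp
qed

lemma wf_PCoh_iff: "wf X k (Coh B' A g) \<longleftrightarrow> tdim B' \<le> k \<and> full_sphere B' k A \<and> pglob (wf X) (tsrc X) (ttgt_tm X) B' g"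
  by (auto elim: wf.cases intro: wf.intros)

lemma C4: "wfp B k u \<Longrightarrow> gmap (posG B) X f \<Longrightarrow> wf X k (psub u (Fb f B))"
proof (induction B k u rule: wfp.induct)
  case (wfp_var p B n)
  then show ?case by (auto simp: Fb_def gmap_posG intro: wf.intros)
next
  case (wfp_coh B' n A B g)
  have fs: "full_sphere B' n A" using fullsph_weaken[OF wfp_coh(2)] .
  have gd: "dom g = poss B'" using pglob_domD[OF wfp_coh(3)] .
  have "pglob (wf X) (tsrc X) (ttgt_tm X) B' (map_option (\<lambda>t. psub t (Fb f B)) \<circ> g)"
    unfolding pglob_def
  proof (intro conjI ballI impI)
    show "dom (map_option (\<lambda>t. psub t (Fb f B)) \<circ> g) = poss B'" using gd by auto
  next
    fix p assume p: "p \<in> poss B'"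
    then obtain t where t: "g p = Some t" using gd by auto
    note gp = pglobD[OF wfp_coh(3) p]
    show "wf X (posdim p) (the ((map_option (\<lambda>t. psub t (Fb f B)) \<circ> g) p))"
      using gp wfp_coh.prems t by simp
  next
    fix p assume p: "p \<in> poss B'" and "0 < posdim p"
    then obtain t where t: "g p = Some t" using gd by auto
    note gp = pglobD[OF wfp_coh(3) p]
    obtain k where k: "posdim p = Suc k" using \<open>0 < posdim p\<close> by (cases "posdim p") auto
    have sp: "possrc p \<in> poss B'" "postgt p \<in> poss B'" using possrc_ispos[of B' p] p k by (auto simp: poss_iff)
    then obtain t1 t2 where t12: "g (possrc p) = Some t1" "g (postgt p) = Some t2" using gd by blast
    have tw: "wfp B (Suc k) t" using gp t k by simp
    have e: "psrc t = t1" "ptgt t = t2" using gp t t12 k by simp_all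
    show "tsrc X (the ((map_option (\<lambda>t. psub t (Fb f B)) \<circ> g) p)) = the ((map_option (\<lambda>t. psub t (Fb f B)) \<circ> g) (possrc p))"
      using C1[OF tw wfp_coh.prems] e t t12 by simp
    show "ttgt_tm X (the ((map_option (\<lambda>t. psub t (Fb f B)) \<circ> g) p)) = the ((map_option (\<lambda>t. psub t (Fb f B)) \<circ> g) (postgt p))"
      using C1[OF tw wfp_coh.prems] e t t12 by simp
  qed
  then show ?case using wfp_coh(1) fs by (simp add: wf_PCoh_iff)
qed

lemma walg_D:
  assumes "walg X \<alpha>"
  shows "globular X" "wf X n t \<Longrightarrow> \<alpha> t \<in> cells X n"
    "wf X (Suc n) t \<Longrightarrow> \<alpha> (tsrc X t) = src X (\<alpha> t) \<and> \<alpha> (ttgt_tm X t) = tgt X (\<alpha> t)"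
    "x \<in> cells X n \<Longrightarrow> \<alpha> (Var x) = x"
    "wf (TG X) n tt \<Longrightarrow> \<alpha> (join tt) = \<alpha> (map_tm \<alpha> tt)"
  using assms unfolding walg_def gmap_def TG_def by auto

lemma wf_Fb: assumes "gmap (posG B) X f" "tdim B \<le> N" "full_sphere B N A"
  shows "wf X N (Coh B A (Fb f B))"
proof -
  have "pglob (wf X) (tsrc X) (ttgt_tm X) B (Fb f B)"
    unfolding pglob_def
  proof (intro conjI ballI impI)
    show "dom (Fb f B) = poss B" by (auto simp: Fb_def split: if_splits)
  next
    fix p assume p: "p \<in> poss B"
    then show "wf X (posdim p) (the (Fb f B p))" using assms(1) by (auto simp: Fb_def gmap_posG intro: wf.intros)
  next
    fix p assume p: "p \<in> poss B" and d: "0 < posdim p"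
    have "possrc p \<in> poss B" "postgt p \<in> poss B"
      using possrc_ispos[of B p] p d by (auto simp: poss_iff)
    then show "tsrc X (the (Fb f B p)) = the (Fb f B (possrc p))" "ttgt_tm X (the (Fb f B p)) = the (Fb f B (postgt p))"
      using p d assms(1) by (auto simp: Fb_def gmap_posG)
  qed
  then show ?thesis using assms by (simp add: wf_PCoh_iff)
qed

lemma CELL: assumes "walg X \<alpha>" "gmap (posG B) X f" "tdim B \<le> N" "full_sphere B N A"
  shows "cohX \<alpha> B A f \<in> cells X N"
  using walg_D(2)[OF assms(1) wf_Fb[OF assms(2-4)]] unfolding cohX_def map_tm_coh .

lemma SRC: assumes "walg X \<alpha>" "gmap (posG B) X f" "tdim B \<le> Suc k" "full_sphere B (Suc k) (Some (a, b))"
  shows "src X (cohX \<alpha> B (Some (a, b)) f) = \<alpha> (psub a (Fb f B)) \<and> tgt X (cohX \<alpha> B (Some (a, b)) f) = \<alpha> (psub b (Fb f B))"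
  using walg_D(3)[OF assms(1) wf_Fb[OF assms(2-4)]] unfolding cohX_def map_tm_coh by simp

lemma ITER: assumes "walg X \<alpha>" "gmap (posG B) X f" "wfp B m u" "k \<le> m"
  shows "\<alpha> (psub ((psrc ^^ k) u) (Fb f B)) = (src X ^^ k) (\<alpha> (psub u (Fb f B))) \<and>
         \<alpha> (psub ((ptgt ^^ k) u) (Fb f B)) = (tgt X ^^ k) (\<alpha> (psub u (Fb f B)))"
  using assms(3,4)
proof (induction k arbitrary: u m)
  case 0 then show ?case by simp
next
  case (Suc k)
  then obtain m' where m: "m = Suc m'" by (cases m) auto
  have w: "wfp B m' (psrc u)" "wfp B m' (ptgt u)" using C2 Suc.prems m by auto
  have IH1: "\<alpha> (psub ((psrc ^^ k) (psrc u)) (Fb f B)) = (src X ^^ k) (\<alpha> (psub (psrc u) (Fb f B)))"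
    using Suc.IH[OF w(1)] Suc.prems m by simp
  have IH2: "\<alpha> (psub ((ptgt ^^ k) (ptgt u)) (Fb f B)) = (tgt X ^^ k) (\<alpha> (psub (ptgt u) (Fb f B)))"
    using Suc.IH[OF w(2)] Suc.prems m by simp
  have wf: "wf X (Suc m') (psub u (Fb f B))" using C4 Suc.prems m assms(2) by blast
  have e: "\<alpha> (psub (psrc u) (Fb f B)) = src X (\<alpha> (psub u (Fb f B)))"
          "\<alpha> (psub (ptgt u) (Fb f B)) = tgt X (\<alpha> (psub u (Fb f B)))"
    using walg_D(3)[OF assms(1) wf] C1[of B m' u X f] Suc.prems m assms(2) by auto
  show ?case using IH1 IH2 e by (simp add: funpow_Suc_right del: funpow.simps)
qed

lemma MONAD: assumes "walg X \<alpha>" "gmap (posG B) X f" "tdim T \<le> m" "full_sphere T m S"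
  "pglob (wfp B) psrc ptgt T G"
  shows "\<alpha> (psub (PCoh T S G) (Fb f B)) =
         \<alpha> (Coh T S (\<lambda>p. if p \<in> poss T then Some (Var (\<alpha> (psub (the (G p)) (Fb f B)))) else None))"
proof -
  let ?tt = "Coh T S (\<lambda>p. if p \<in> poss T then Some (Var (psub (the (G p)) (Fb f B))) else None)"
  have gd: "dom G = poss T" using assms(5) unfolding pglob_def by simp
  have gw: "\<forall>p\<in>poss T. wfp B (posdim p) (the (G p))"
    using assms(5) unfolding pglob_def by blast
  have gs: "\<forall>p\<in>poss T. 0 < posdim p \<longrightarrow> psrc (the (G p)) = the (G (possrc p)) \<and> ptgt (the (G p)) = the (G (postgt p))"
    using assms(5) unfolding pglob_def by blast
  have j: "join ?tt = psub (PCoh T S G) (Fb f B)"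
  proof -
    have "map_option join \<circ> (\<lambda>p. (if p \<in> poss T then Some (Var (psub (the (G p)) (Fb f B))) else None))
       = map_option (\<lambda>t. psub t (Fb f B)) \<circ> G"
      using gd by (force simp: fun_eq_iff)
    then show ?thesis by simp
  qed
  have mp: "map_tm \<alpha> ?tt = Coh T S (\<lambda>p. if p \<in> poss T then Some (Var (\<alpha> (psub (the (G p)) (Fb f B)))) else None)"
    by (simp add: fun_eq_iff)
  have "pglob (wf (TG X)) (tsrc (TG X)) (ttgt_tm (TG X)) T
      (\<lambda>p. if p \<in> poss T then Some (Var (psub (the (G p)) (Fb f B))) else None)"
    unfolding pglob_def
  proof (intro conjI ballI impI)
    show "dom (\<lambda>p. if p \<in> poss T then Some (Var (psub (the (G p)) (Fb f B))) else None) = poss T"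
      by (auto split: if_splits)
  next
    fix p assume p: "p \<in> poss T"
    show "wf (TG X) (posdim p) (the (if p \<in> poss T then Some (Var (psub (the (G p)) (Fb f B))) else None))"
      using p gw C4[OF _ assms(2)] by (auto simp: TG_def intro!: wf.intros)
  next
    fix p assume p: "p \<in> poss T" and d: "0 < posdim p"
    then obtain k where k: "posdim p = Suc k" by (cases "posdim p") auto
    have sp: "possrc p \<in> poss T" "postgt p \<in> poss T" using possrc_ispos[of T p] p k by (auto simp: poss_iff)
    have tw: "wfp B (Suc k) (the (G p))" using gw[rule_format, OF p] k by simp
    show "tsrc (TG X) (the (if p \<in> poss T then Some (Var (psub (the (G p)) (Fb f B))) else None)) =
          the (if possrc p \<in> poss T then Some (Var (psub (the (G (possrc p))) (Fb f B))) else None)"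
      using C1[OF tw assms(2)] gs p k sp by (simp add: TG_def)
    show "ttgt_tm (TG X) (the (if p \<in> poss T then Some (Var (psub (the (G p)) (Fb f B))) else None)) =
          the (if postgt p \<in> poss T then Some (Var (psub (the (G (postgt p))) (Fb f B))) else None)"
      using C1[OF tw assms(2)] gs p k sp by (simp add: TG_def)
  qed
  then have "wf (TG X) m ?tt" using assms(3,4) by (simp add: wf_PCoh_iff)
  from walg_D(5)[OF assms(1) this] j mp show ?thesis by simp
qed




definition zp :: "nat \<Rightarrow> pos \<Rightarrow> pos" where "zp d q = (PS 0 ^^ d) q"

lemma zp_0[simp]: "zp 0 q = q" by (simp add: zp_def)
lemma zp_Suc: "zp (Suc d) q = PS 0 (zp d q)" by (simp add: zp_def)
lemma zp_Suc': "zp (Suc d) q = zp d (PS 0 q)" by (simp add: zp_def funpow_Suc_right del: funpow.simps)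

lemma posdim_zp[simp]: "posdim (zp d q) = d + posdim q" by (induction d) (auto simp: zp_Suc)
lemma pinds_zp[simp]: "pinds (zp d q) = replicate d 0 @ pinds q" by (induction d) (auto simp: zp_Suc)
lemma pinds_ne[simp]: "pinds q \<noteq> []" by (cases q) auto
lemma top_zp: "top n = zp n (PZ 0)" by (induction n) (auto simp: zp_Suc)

lemma possrc_PS0: "0 < posdim q \<Longrightarrow> possrc (PS i q) = PS i (possrc q) \<and> postgt (PS i q) = PS i (postgt q)"
  by (cases q) auto

lemma possrc_zp: "0 < posdim q \<Longrightarrow> possrc (zp d q) = zp d (possrc q) \<and> postgt (zp d q) = zp d (postgt q)"
  by (induction d) (auto simp: zp_Suc possrc_PS0)

lemma possrc_zpZ[simp]: "possrc (zp (Suc d) (PZ j)) = zp d (PZ 0)" "postgt (zp (Suc d) (PZ j)) = zp d (PZ 1)"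
  using possrc_zp[of "PS 0 (PZ j)" d] by (simp_all add: zp_Suc')

lemma possrc_zpS[simp]: "possrc (zp d (PS i (PZ 0))) = zp d (PZ i)" "postgt (zp d (PS i (PZ 0))) = zp d (PZ (Suc i))"
  using possrc_zp[of "PS i (PZ 0)" d] by simp_all

lemma zp_inj[simp]: "zp d q = zp d q' \<longleftrightarrow> q = q'" by (induction d) (auto simp: zp_Suc)

lemma tdim_single: "tdim (Node [C]) = Suc (tdim C)" by (simp add: tdim.simps)
lemma tdim_disk[simp]: "tdim (disk n) = n" by (induction n) (auto simp: tdim_single tdim.simps)
lemma tdim_comptree[simp]: "tdim (comptree n) = Suc n"
  by (induction n) (auto simp: tdim_single tdim.simps)

lemma poss_disk: "p \<in> poss (disk n) \<longleftrightarrow> p = zp n (PZ 0) \<or> (\<exists>d j. d < n \<and> j \<le> 1 \<and> p = zp d (PZ j))"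
proof (induction n arbitrary: p)
  case 0
  then show ?case by (auto simp: poss_iff ispos_Node_iff)
next
  case (Suc n)
  show ?case
  proof
    assume "p \<in> poss (disk (Suc n))"
    then have "(\<exists>j. p = PZ j \<and> j \<le> 1) \<or> (\<exists>q. p = PS 0 q \<and> q \<in> poss (disk n))"
      by (auto simp: poss_iff ispos_Node_iff)
    then show "p = zp (Suc n) (PZ 0) \<or> (\<exists>d j. d < Suc n \<and> j \<le> 1 \<and> p = zp d (PZ j))"
    proof
      assume "\<exists>j. p = PZ j \<and> j \<le> 1"
      then show ?thesis by (metis zero_less_Suc zp_0)
    next
      assume "\<exists>q. p = PS 0 q \<and> q \<in> poss (disk n)"
      then obtain q where q: "p = PS 0 q" "q \<in> poss (disk n)" by blast
      from q(2) Suc.IH have "q = zp n (PZ 0) \<or> (\<exists>d j. d < n \<and> j \<le> 1 \<and> q = zp d (PZ j))" by blast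
      then show ?thesis using q(1) by (metis Suc_less_eq zp_Suc)
    qed
  next
    assume "p = zp (Suc n) (PZ 0) \<or> (\<exists>d j. d < Suc n \<and> j \<le> 1 \<and> p = zp d (PZ j))"
    then consider "p = zp (Suc n) (PZ 0)" | "\<exists>j. j \<le> 1 \<and> p = PZ j" | "\<exists>d j. d < n \<and> j \<le> 1 \<and> p = zp (Suc d) (PZ j)"
      by (metis less_Suc_eq_0_disj zp_0)
    then show "p \<in> poss (disk (Suc n))"
    proof cases
      case 1
      have "zp n (PZ 0) \<in> poss (disk n)" using Suc.IH by blast
      then show ?thesis using 1 by (auto simp: poss_iff ispos_Node_iff zp_Suc)
    next
      case 2 then show ?thesis by (auto simp: poss_iff ispos_Node_iff)
    next
      case 3
      then obtain d j where dj: "d < n" "j \<le> 1" "p = zp (Suc d) (PZ j)" by blast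
      have "zp d (PZ j) \<in> poss (disk n)" using Suc.IH dj by blast
      then show ?thesis using dj by (auto simp: poss_iff ispos_Node_iff zp_Suc)
    qed
  qed
qed

lemma poss_comptree: "p \<in> poss (comptree n) \<longleftrightarrow> (\<exists>i\<le>1. p = zp n (PS i (PZ 0))) \<or> (\<exists>j\<le>2. p = zp n (PZ j)) \<or>
   (\<exists>d j. d < n \<and> j \<le> 1 \<and> p = zp d (PZ j))"
proof (induction n arbitrary: p)
  case 0
  show ?case
  proof
    assume "p \<in> poss (comptree 0)"
    then show "(\<exists>i\<le>1. p = zp 0 (PS i (PZ 0))) \<or> (\<exists>j\<le>2. p = zp 0 (PZ j)) \<or> (\<exists>d j. d < 0 \<and> j \<le> 1 \<and> p = zp d (PZ j))"
      by (auto simp: poss_iff ispos_Node_iff less_Suc_eq nth_Cons')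
  next
    assume "(\<exists>i\<le>1. p = zp 0 (PS i (PZ 0))) \<or> (\<exists>j\<le>2. p = zp 0 (PZ j)) \<or> (\<exists>d j. d < 0 \<and> j \<le> 1 \<and> p = zp d (PZ j))"
    then show "p \<in> poss (comptree 0)"
      by (auto simp: poss_iff ispos_Node_iff le_Suc_eq nth_Cons')
  qed
next
  case (Suc n)
  show ?case
  proof
    assume "p \<in> poss (comptree (Suc n))"
    then have "(\<exists>j. p = PZ j \<and> j \<le> 1) \<or> (\<exists>q. p = PS 0 q \<and> q \<in> poss (comptree n))"
      by (auto simp: poss_iff ispos_Node_iff)
    then show "(\<exists>i\<le>1. p = zp (Suc n) (PS i (PZ 0))) \<or> (\<exists>j\<le>2. p = zp (Suc n) (PZ j)) \<or>
      (\<exists>d j. d < Suc n \<and> j \<le> 1 \<and> p = zp d (PZ j))"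
    proof
      assume "\<exists>j. p = PZ j \<and> j \<le> 1"
      then show ?thesis by (metis zero_less_Suc zp_0)
    next
      assume "\<exists>q. p = PS 0 q \<and> q \<in> poss (comptree n)"
      then obtain q where q: "p = PS 0 q" "q \<in> poss (comptree n)" by blast
      from q(2) Suc.IH have "(\<exists>i\<le>1. q = zp n (PS i (PZ 0))) \<or> (\<exists>j\<le>2. q = zp n (PZ j)) \<or>
        (\<exists>d j. d < n \<and> j \<le> 1 \<and> q = zp d (PZ j))" by blast
      then show ?thesis using q(1) by (metis Suc_less_eq zp_Suc)
    qed
  next
    assume "(\<exists>i\<le>1. p = zp (Suc n) (PS i (PZ 0))) \<or> (\<exists>j\<le>2. p = zp (Suc n) (PZ j)) \<or>
      (\<exists>d j. d < Suc n \<and> j \<le> 1 \<and> p = zp d (PZ j))"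
    note H = this
    have PS: "PS 0 q \<in> poss (comptree (Suc n))" if "q \<in> poss (comptree n)" for q
      using that by (auto simp: poss_iff ispos_Node_iff)
    have PZ: "PZ j \<in> poss (comptree (Suc n))" if "j \<le> 1" for j
      using that by (auto simp: poss_iff ispos_Node_iff)
    from H show "p \<in> poss (comptree (Suc n))"
    proof (elim disjE exE conjE)
      fix i assume "i \<le> 1" "p = zp (Suc n) (PS i (PZ 0))"
      then show ?thesis using PS Suc.IH[of "zp n (PS i (PZ 0))"] by (auto simp: zp_Suc)
    next
      fix j assume "j \<le> 2" "p = zp (Suc n) (PZ j)"
      then show ?thesis using PS Suc.IH[of "zp n (PZ j)"] by (auto simp: zp_Suc)
    next
      fix d j assume dj: "d < Suc n" "j \<le> 1" "p = zp d (PZ j)"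
      show ?thesis
      proof (cases d)
        case 0 then show ?thesis using dj PZ by simp
      next
        case (Suc d')
        then show ?thesis using dj PS Suc.IH[of "zp d' (PZ j)"] by (auto simp: zp_Suc)
      qed
    qed
  qed
qed

lemma bdry_comptree: "bdry n (comptree n) = disk n"
  by (induction n) auto

lemma ssrc_comptree: "ssrc n (comptree n) (top n) = zp n (PZ 0) \<and> ttgt n (comptree n) (top n) = zp n (PZ 2)"
  by (induction n) (auto simp: zp_Suc)

lemma top_disk: "top n \<in> poss (disk n)" using poss_disk top_zp by blast

lemma ssrc_disk: "ssrc n (disk n) (top n) = top n \<and> ttgt n (disk n) (top n) = top n"
  using ssrc_id[of "disk n" n "top n"] top_disk by (simp add: poss_iff)

lemma covers_zp: "{zp k (PZ j0)} \<union> {zp d (PZ j) | d j. d < k \<and> j \<le> 1} \<subseteq> \<Union> (occ ` pbdries k (PVar (zp k (PZ j0))))"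
proof (induction k arbitrary: j0)
  case 0 then show ?case by auto
next
  case (Suc k)
  have s: "psrc (PVar (zp (Suc k) (PZ j0))) = PVar (zp k (PZ 0))" "ptgt (PVar (zp (Suc k) (PZ j0))) = PVar (zp k (PZ 1))"
    by simp_all
  have e: "pbdries (Suc k) (PVar (zp (Suc k) (PZ j0))) = {PVar (zp (Suc k) (PZ j0))} \<union> pbdries k (PVar (zp k (PZ 0))) \<union> pbdries k (PVar (zp k (PZ 1)))"
    by (simp only: pbdries.simps s)
  have U: "\<Union> (occ ` pbdries k (PVar (zp k (PZ 0)))) \<subseteq> \<Union> (occ ` pbdries (Suc k) (PVar (zp (Suc k) (PZ j0))))"
          "\<Union> (occ ` pbdries k (PVar (zp k (PZ 1)))) \<subseteq> \<Union> (occ ` pbdries (Suc k) (PVar (zp (Suc k) (PZ j0))))"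
          "zp (Suc k) (PZ j0) \<in> \<Union> (occ ` pbdries (Suc k) (PVar (zp (Suc k) (PZ j0))))"
    unfolding e by auto
  show ?case
  proof
    fix x assume "x \<in> {zp (Suc k) (PZ j0)} \<union> {zp d (PZ j) | d j. d < Suc k \<and> j \<le> 1}"
    then consider "x = zp (Suc k) (PZ j0)" | d j where "d < Suc k" "j \<le> 1" "x = zp d (PZ j)" by blast
    then show "x \<in> \<Union> (occ ` pbdries (Suc k) (PVar (zp (Suc k) (PZ j0))))"
    proof cases
      case 1 then show ?thesis using U(3) by simp
    next
      case 2
      show ?thesis
      proof (cases "d < k")
        case True
        then have "x \<in> {zp k (PZ 0)} \<union> {zp d (PZ j) | d j. d < k \<and> j \<le> 1}" using 2 by blast
        then show ?thesis using Suc.IH[of 0] U(1) by blast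
      next
        case False
        then have "d = k" using 2 by simp
        then have "x = zp k (PZ 0) \<or> x = zp k (PZ 1)" using 2 by (cases j) auto
        then show ?thesis using Suc.IH[of 0] Suc.IH[of 1] U(1,2) by blast
      qed
    qed
  qed
qed

lemma covers_disk: "covers (disk n) n (PVar (top n))"
  unfolding covers_def
proof
  fix p assume "p \<in> poss (disk n)"
  then have "p \<in> {zp n (PZ 0)} \<union> {zp d (PZ j) | d j. d < n \<and> j \<le> 1}" using poss_disk by blast
  then have "p \<in> \<Union> (occ ` pbdries n (PVar (zp n (PZ 0))))" using covers_zp[of n 0] by blast
  then show "p \<in> \<Union> (occ ` pbdries n (PVar (top n)))" using top_zp by simp
qed




definition low :: "nat \<Rightarrow> ptm \<Rightarrow> pos \<Rightarrow> ptm" where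
  "low n a p = (if last (pinds p) = 0 then (psrc ^^ (n - posdim p)) a else (ptgt ^^ (n - posdim p)) a)"

definition cterm :: "nat \<Rightarrow> ptm \<Rightarrow> ptm \<Rightarrow> ptm \<Rightarrow> ptm \<Rightarrow> pos \<Rightarrow> ptm" where
  "cterm n xt yt a b p = (if posdim p = Suc n then (if pinds p ! n = 0 then xt else yt)
     else if posdim p = n then (if last (pinds p) = 0 then a else if last (pinds p) = 1 then b else a)
     else low n a p)"

definition dterm :: "nat \<Rightarrow> ptm \<Rightarrow> pos \<Rightarrow> ptm" where
  "dterm n a p = (if posdim p = n then a else low n a p)"

lemma low_zp[simp]: "low n a (zp d (PZ j)) = (if j = 0 then (psrc ^^ (n - d)) a else (ptgt ^^ (n - d)) a)"
  by (simp add: low_def)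

lemma cterm_top[simp]: "cterm n xt yt a b (zp n (PS i (PZ 0))) = (if i = 0 then xt else yt)"
  by (simp add: cterm_def nth_append)

lemma cterm_mid[simp]: "cterm n xt yt a b (zp n (PZ j)) = (if j = 1 then b else a)"
  by (simp add: cterm_def)

lemma cterm_low[simp]: "d < n \<Longrightarrow> cterm n xt yt a b (zp d (PZ j)) = low n a (zp d (PZ j))"
  unfolding cterm_def by (simp only: posdim_zp) simp

lemma dterm_top[simp]: "dterm n a (zp n (PZ 0)) = a" by (simp add: dterm_def)

lemma dterm_low[simp]: "d < n \<Longrightarrow> dterm n a (zp d (PZ j)) = low n a (zp d (PZ j))"
  unfolding dterm_def by (simp only: posdim_zp) simp

lemma ITW: "wfp B m u \<Longrightarrow> k \<le> m \<Longrightarrow> wfp B (m - k) ((psrc ^^ k) u) \<and> wfp B (m - k) ((ptgt ^^ k) u)"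
proof (induction k arbitrary: u m)
  case 0 then show ?case by simp
next
  case (Suc k)
  then obtain m' where m: "m = Suc m'" by (cases m) auto
  have w: "wfp B m' (psrc u)" "wfp B m' (ptgt u)" using C2 Suc.prems m by auto
  show ?case using Suc.IH[OF w(1)] Suc.IH[OF w(2)] Suc.prems m
    by (simp add: funpow_Suc_right del: funpow.simps)
qed

lemma GI: "wfp B m u \<Longrightarrow> Suc k < m \<Longrightarrow>
   psrc ((ptgt ^^ Suc k) u) = (psrc ^^ Suc (Suc k)) u \<and> ptgt ((psrc ^^ Suc k) u) = (ptgt ^^ Suc (Suc k)) u"
proof (induction k arbitrary: u m)
  case 0
  then obtain m' where m: "m = Suc (Suc m')" by (cases m; cases "m - 1") auto
  then show ?case using G_lemma[of B m' u] 0 by simp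
next
  case (Suc k)
  then obtain m' where m: "m = Suc m'" by (cases m) auto
  have w: "wfp B m' (psrc u)" "wfp B m' (ptgt u)" using C2 Suc.prems m by auto
  obtain m'' where m2: "m = Suc (Suc m'')" using Suc.prems by (cases m; cases "m - 1") auto
  have g: "psrc (ptgt u) = psrc (psrc u)" "ptgt (psrc u) = ptgt (ptgt u)" using G_lemma[of B m'' u] Suc.prems m2 by auto
  have "psrc ((ptgt ^^ Suc (Suc k)) u) = psrc ((ptgt ^^ Suc k) (ptgt u))"
    by (simp only: funpow_Suc_right o_apply)
  also have "\<dots> = (psrc ^^ Suc (Suc k)) (ptgt u)" using Suc.IH[OF w(2)] Suc.prems m by simp
  also have "\<dots> = (psrc ^^ Suc k) (psrc (ptgt u))" by (simp only: funpow_Suc_right o_apply)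
  also have "\<dots> = (psrc ^^ Suc (Suc (Suc k))) u" using g by (simp only: funpow_Suc_right o_apply)
  finally have 1: "psrc ((ptgt ^^ Suc (Suc k)) u) = (psrc ^^ Suc (Suc (Suc k))) u" .
  have "ptgt ((psrc ^^ Suc (Suc k)) u) = ptgt ((psrc ^^ Suc k) (psrc u))"
    by (simp only: funpow_Suc_right o_apply)
  also have "\<dots> = (ptgt ^^ Suc (Suc k)) (psrc u)" using Suc.IH[OF w(1)] Suc.prems m by simp
  also have "\<dots> = (ptgt ^^ Suc k) (ptgt (psrc u))" by (simp only: funpow_Suc_right o_apply)
  also have "\<dots> = (ptgt ^^ Suc (Suc (Suc k))) u" using g by (simp only: funpow_Suc_right o_apply)
  finally show ?case using 1 by simp
qed

lemma LOW: assumes "wfp B n a" "d < n" "j \<le> 1"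
  shows "wfp B d (low n a (zp d (PZ j)))"
    "d = Suc d' \<Longrightarrow> psrc (low n a (zp d (PZ j))) = low n a (zp d' (PZ 0)) \<and>
                   ptgt (low n a (zp d (PZ j))) = low n a (zp d' (PZ 1))"
proof -
  show "wfp B d (low n a (zp d (PZ j)))" using ITW[OF assms(1), of "n - d"] assms(2) by simp
next
  assume d: "d = Suc d'"
  obtain k where k: "n - d = Suc k" using assms(2) by (cases "n - d") auto
  have k2: "n - d' = Suc (Suc k)" using k d by simp
  have kl: "Suc k < n" using k d by simp
  have g: "psrc ((ptgt ^^ Suc k) a) = (psrc ^^ Suc (Suc k)) a" "ptgt ((psrc ^^ Suc k) a) = (ptgt ^^ Suc (Suc k)) a"
    using GI[OF assms(1) kl] by auto
  show "psrc (low n a (zp d (PZ j))) = low n a (zp d' (PZ 0)) \<and> ptgt (low n a (zp d (PZ j))) = low n a (zp d' (PZ 1))"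
    using g k k2 by simp
qed




lemma PGLOB_I:
  assumes "\<And>p. p \<in> poss T \<Longrightarrow> W (posdim p) (\<tau> p)"
    "\<And>p. p \<in> poss T \<Longrightarrow> 0 < posdim p \<Longrightarrow> sr (\<tau> p) = \<tau> (possrc p) \<and> tg (\<tau> p) = \<tau> (postgt p)"
  shows "pglob W sr tg T (\<lambda>p. if p \<in> poss T then Some (\<tau> p) else None)"
  unfolding pglob_def
proof (intro conjI ballI impI)
  show "dom (\<lambda>p. if p \<in> poss T then Some (\<tau> p) else None) = poss T" by (auto split: if_splits)
next
  fix p assume "p \<in> poss T"
  then show "W (posdim p) (the (if p \<in> poss T then Some (\<tau> p) else None))" using assms(1) by simp
next
  fix p assume p: "p \<in> poss T" "0 < posdim p"
  then have "possrc p \<in> poss T" "postgt p \<in> poss T" using possrc_ispos[of T p] by (auto simp: poss_iff)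
  then show "sr (the (if p \<in> poss T then Some (\<tau> p) else None)) = the (if possrc p \<in> poss T then Some (\<tau> (possrc p)) else None)"
     "tg (the (if p \<in> poss T then Some (\<tau> p) else None)) = the (if postgt p \<in> poss T then Some (\<tau> (postgt p)) else None)"
    using assms(2)[OF p] p by simp_all
qed

lemma PGC:
  assumes wa: "wfp B n a" and wb: "wfp B n b" and par: "0 < n \<Longrightarrow> psrc a = psrc b \<and> ptgt a = ptgt b"
    and wx: "wfp B (Suc n) xt" and wy: "wfp B (Suc n) yt"
    and sx: "psrc xt = a" "ptgt xt = b" "psrc yt = b" "ptgt yt = a"
  shows "pglob (wfp B) psrc ptgt (comptree n) (\<lambda>p. if p \<in> poss (comptree n) then Some (cterm n xt yt a b p) else None)"
proof (rule PGLOB_I)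
  fix p assume "p \<in> poss (comptree n)"
  then consider (T) i where "i \<le> 1" "p = zp n (PS i (PZ 0))" | (M) j where "j \<le> 2" "p = zp n (PZ j)"
    | (L) d j where "d < n" "j \<le> 1" "p = zp d (PZ j)"
    unfolding poss_comptree by blast
  then show "wfp B (posdim p) (cterm n xt yt a b p)"
  proof cases
    case T then show ?thesis using wx wy by simp
  next
    case M then show ?thesis using wa wb by simp
  next
    case L then show ?thesis using LOW(1)[OF wa L(1,2)] by simp
  qed
next
  fix p assume p: "p \<in> poss (comptree n)" "0 < posdim p"
  from p(1) consider (T) i where "i \<le> 1" "p = zp n (PS i (PZ 0))" | (M) j where "j \<le> 2" "p = zp n (PZ j)"
    | (L) d j where "d < n" "j \<le> 1" "p = zp d (PZ j)"
    unfolding poss_comptree by blast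
  then show "psrc (cterm n xt yt a b p) = cterm n xt yt a b (possrc p) \<and> ptgt (cterm n xt yt a b p) = cterm n xt yt a b (postgt p)"
  proof cases
    case T
    then show ?thesis using sx by (cases i) auto
  next
    case M
    then obtain m where m: "n = Suc m" using p(2) by (cases n) auto
    have "psrc a = psrc b" "ptgt a = ptgt b" using par m by auto
    then show ?thesis using M m by simp
  next
    case L
    then obtain d' where d: "d = Suc d'" using p(2) by (cases d) auto
    have dl: "d' < n" using L d by simp
    show ?thesis using LOW(2)[OF wa L(1,2) d] L dl d by simp
  qed
qed

lemma PGD:
  assumes wa: "wfp B n a"
  shows "pglob (wfp B) psrc ptgt (disk n) (\<lambda>p. if p \<in> poss (disk n) then Some (dterm n a p) else None)"
proof (rule PGLOB_I)
  fix p assume "p \<in> poss (disk n)"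
  then consider (T) "p = zp n (PZ 0)" | (L) d j where "d < n" "j \<le> 1" "p = zp d (PZ j)"
    unfolding poss_disk by blast
  then show "wfp B (posdim p) (dterm n a p)"
  proof cases
    case T then show ?thesis using wa by simp
  next
    case L then show ?thesis using LOW(1)[OF wa L(1,2)] by simp
  qed
next
  fix p assume p: "p \<in> poss (disk n)" "0 < posdim p"
  from p(1) consider (T) "p = zp n (PZ 0)" | (L) d j where "d < n" "j \<le> 1" "p = zp d (PZ j)"
    unfolding poss_disk by blast
  then show "psrc (dterm n a p) = dterm n a (possrc p) \<and> ptgt (dterm n a p) = dterm n a (postgt p)"
  proof cases
    case T
    then obtain m where m: "n = Suc m" using p(2) by (cases n) auto
    then show ?thesis using T by simp
  next
    case L
    then obtain d' where d: "d = Suc d'" using p(2) by (cases d) auto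
    have dl: "d' < n" using L d by simp
    show ?thesis using LOW(2)[OF wa L(1,2) d] L dl d by simp
  qed
qed

lemma pmap_PVar[simp]: "pmap g (PVar p) = PVar (g p)" by (simp add: pmap_def)

lemma SC: "full_sphere (comptree n) (Suc n)
   (Some (PVar (ssrc n (comptree n) (top n)), PVar (ttgt n (comptree n) (top n))))"
proof -
  have e: "ssrc n (comptree n) (top n) = zp n (PZ 0)" "ttgt n (comptree n) (top n) = zp n (PZ 2)"
    using ssrc_comptree by auto
  have p: "zp n (PZ 0) \<in> poss (comptree n)" "zp n (PZ 2) \<in> poss (comptree n)"
    unfolding poss_comptree by auto
  have w: "wfp (comptree n) n (PVar (zp n (PZ 0)))" "wfp (comptree n) n (PVar (zp n (PZ 2)))"
    using p by (auto simp: wfp_PVar_iff)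
  have par: "0 < n \<longrightarrow> psrc (PVar (zp n (PZ 0))) = psrc (PVar (zp n (PZ 2))) \<and> ptgt (PVar (zp n (PZ 0))) = ptgt (PVar (zp n (PZ 2)))"
    by (cases n) auto
  have wd: "wfp (bdry n (comptree n)) n (PVar (top n))" using top_disk by (simp add: bdry_comptree wfp_PVar_iff top_zp)
  have cv: "covers (bdry n (comptree n)) n (PVar (top n))" using covers_disk by (simp add: bdry_comptree)
  show ?thesis unfolding fullsph_def e
    apply (rule disjI2)
    apply (rule exI[of _ n], rule exI[of _ "PVar (zp n (PZ 0))"], rule exI[of _ "PVar (zp n (PZ 2))"],
           rule exI[of _ "PVar (top n)"], rule exI[of _ "PVar (top n)"])
    using w par wd cv e by simp
qed

lemma SD: "full_sphere (disk n) (Suc n) (Some (PVar (top n), PVar (top n)))"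
proof -
  have bd: "bdry n (disk n) = disk n" using bdry_id by simp
  have w: "wfp (disk n) n (PVar (top n))" using top_disk by (simp add: wfp_PVar_iff top_zp)
  show ?thesis unfolding fullsph_def
    apply (rule disjI2)
    apply (rule exI[of _ n], rule exI[of _ "PVar (top n)"], rule exI[of _ "PVar (top n)"],
           rule exI[of _ "PVar (top n)"], rule exI[of _ "PVar (top n)"])
    using w covers_disk[of n] ssrc_disk[of n] bd by simp
qed

lemma FS: assumes "tdim B \<le> k" "wfp B k u" "wfp B k v" "0 < k \<longrightarrow> psrc u = psrc v \<and> ptgt u = ptgt v"
  "covers B k u" "covers B k v"
  shows "full_sphere B (Suc k) (Some (u, v))"
proof -
  have bd: "bdry k B = B" using bdry_id assms(1) .
  have "pmap (ssrc k B) u = u" "pmap (ttgt k B) v = v"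
    unfolding pmap_def using ssrc_id[OF assms(1)] assms(2,3)
    by (auto intro!: psubst_id_wfp simp: poss_iff)
  then show ?thesis unfolding fullsph_def using assms bd
    apply (intro disjI2)
    apply (rule exI[of _ k], rule exI[of _ u], rule exI[of _ v], rule exI[of _ u], rule exI[of _ v])
    by simp
qed

lemma FSinv: assumes "tdim B \<le> k" "full_sphere B (Suc k) (Some (u, v))"
  shows "wfp B k u \<and> wfp B k v \<and> (0 < k \<longrightarrow> psrc u = psrc v \<and> ptgt u = ptgt v) \<and> covers B k u \<and> covers B k v"
proof -
  have bd: "bdry k B = B" using bdry_id assms(1) .
  obtain u' v' where H: "wfp B k u" "wfp B k v" "0 < k \<longrightarrow> psrc u = psrc v \<and> ptgt u = ptgt v"
    "wfp B k u'" "wfp B k v'" "covers B k u'" "covers B k v'" "u = pmap (ssrc k B) u'" "v = pmap (ttgt k B) v'"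
    using assms(2) bd unfolding fullsph_def by auto
  have "pmap (ssrc k B) u' = u'" "pmap (ttgt k B) v' = v'"
    unfolding pmap_def using ssrc_id[OF assms(1)] H(4,5)
    by (auto intro!: psubst_id_wfp simp: poss_iff)
  then show ?thesis using H by simp
qed




lemma pglob_idp: "pglob (wfp B) psrc ptgt B (idp B)"
  unfolding idp_def by (rule PGLOB_I) (auto simp: wfp_PVar_iff)

lemma alpha_xt: "\<alpha> (psub (PCoh B A (idp B)) (Fb f B)) = cohX \<alpha> B A f"
  by (simp only: psub_idp cohX_def map_tm_coh)

lemma VALC:
  assumes wl: "walg X \<alpha>" and gm: "gmap (posG B) X f" and wa: "wfp B n a" and wb: "wfp B n b"
    and par: "0 < n \<Longrightarrow> psrc a = psrc b \<and> ptgt a = ptgt b"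
    and ex: "\<alpha> (psub xt (Fb f B)) = x" "\<alpha> (psub yt (Fb f B)) = y"
    and ea: "\<alpha> (psub a (Fb f B)) = src X x" "\<alpha> (psub b (Fb f B)) = tgt X x"
    and eb: "\<alpha> (psub a (Fb f B)) = tgt X y"
    and p: "p \<in> poss (comptree n)"
  shows "\<alpha> (psub (cterm n xt yt a b p) (Fb f B)) = compmap X n x y p"
proof -
  from p consider (T) i where "i \<le> 1" "p = zp n (PS i (PZ 0))" | (M) j where "j \<le> 2" "p = zp n (PZ j)"
    | (L) d j where "d < n" "j \<le> 1" "p = zp d (PZ j)"
    unfolding poss_comptree by blast
  then show ?thesis
  proof cases
    case T
    then show ?thesis using ex by (simp add: compmap_def Let_def nth_append)
  next
    case M
    then show ?thesis using ea eb by (auto simp: compmap_def Let_def)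
  next
    case L
    obtain k where k: "n - d = Suc k" using L(1) by (cases "n - d") auto
    have sn: "Suc n - d = Suc (Suc k)" using k L(1) by simp
    have pr: "psrc a = psrc b" "ptgt a = ptgt b" using par L(1) by auto
    show ?thesis
    proof (cases "j = 0")
      case True
      have "\<alpha> (psub ((psrc ^^ (n - d)) a) (Fb f B)) = (src X ^^ (n - d)) (src X x)"
        using ITER[OF wl gm wa, of "n - d"] ea by simp
      also have "\<dots> = (src X ^^ Suc (n - d)) x" by (simp only: funpow_Suc_right o_apply)
      finally show ?thesis using True L k sn by (simp add: compmap_def Let_def)
    next
      case False
      have "(ptgt ^^ (n - d)) a = (ptgt ^^ k) (ptgt a)" using k by (simp only: funpow_Suc_right o_apply)
      also have "\<dots> = (ptgt ^^ (n - d)) b" using k pr by (simp only: funpow_Suc_right o_apply)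
      finally have e1: "(ptgt ^^ (n - d)) a = (ptgt ^^ (n - d)) b" .
      have "\<alpha> (psub ((ptgt ^^ (n - d)) b) (Fb f B)) = (tgt X ^^ (n - d)) (tgt X x)"
        using ITER[OF wl gm wb, of "n - d"] ea by simp
      also have "\<dots> = (tgt X ^^ Suc (n - d)) x" by (simp only: funpow_Suc_right o_apply)
      finally show ?thesis using False L k sn e1 by (simp add: compmap_def Let_def)
    qed
  qed
qed

lemma VALD:
  assumes wl: "walg X \<alpha>" and gm: "gmap (posG B) X f" and wa: "wfp B n a"
    and ea: "\<alpha> (psub a (Fb f B)) = s"
    and p: "p \<in> poss (disk n)"
  shows "\<alpha> (psub (dterm n a p) (Fb f B)) = diskmap X n s p"
proof -
  from p consider (T) "p = zp n (PZ 0)" | (L) d j where "d < n" "j \<le> 1" "p = zp d (PZ j)"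
    unfolding poss_disk by blast
  then show ?thesis
  proof cases
    case T then show ?thesis using ea by (simp add: diskmap_def Let_def)
  next
    case L
    then show ?thesis using ITER[OF wl gm wa, of "n - d"] ea by (auto simp: diskmap_def Let_def)
  qed
qed

lemma ETA:
  assumes wl: "walg X \<alpha>" and gm: "gmap (posG B) X f" and td: "tdim B \<le> n"
    and fs: "full_sphere B (Suc n) (Some (a, b))"
  shows "\<exists>A'. full_sphere B (Suc (Suc n)) A' \<and>
    src X (cohX \<alpha> B A' f) = comp X \<alpha> n (cohX \<alpha> B (Some (a, b)) f) (cohX \<alpha> B (Some (b, a)) f) \<and>
    tgt X (cohX \<alpha> B A' f) = idc X \<alpha> n (src X (cohX \<alpha> B (Some (a, b)) f))"
proof -
  note F = FSinv[OF td fs]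
  have wa: "wfp B n a" and wb: "wfp B n b" and par: "0 < n \<longrightarrow> psrc a = psrc b \<and> ptgt a = ptgt b"
    and cova: "covers B n a" and covb: "covers B n b" using F by auto
  have fs': "full_sphere B (Suc n) (Some (b, a))" using FS[OF td wb wa _ covb cova] par by auto
  have td': "tdim B \<le> Suc n" using td by simp
  define x where "x = cohX \<alpha> B (Some (a, b)) f"
  define y where "y = cohX \<alpha> B (Some (b, a)) f"
  define xt where "xt = PCoh B (Some (a, b)) (idp B)"
  define yt where "yt = PCoh B (Some (b, a)) (idp B)"
  have wx: "wfp B (Suc n) xt" unfolding xt_def using td' fs pglob_idp by (simp add: wfp_PCoh_iff)
  have wy: "wfp B (Suc n) yt" unfolding yt_def using td' fs' pglob_idp by (simp add: wfp_PCoh_iff)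
  have idv: "\<And>p. p \<in> poss B \<Longrightarrow> the (idp B p) = PVar p" by (simp add: idp_def)
  have sa: "psubst a (\<lambda>p. the (idp B p)) = a" "psubst b (\<lambda>p. the (idp B p)) = b"
    using psubst_id_wfp[OF wa idv] psubst_id_wfp[OF wb idv] by auto
  have sx: "psrc xt = a" "ptgt xt = b" "psrc yt = b" "ptgt yt = a"
    unfolding xt_def yt_def using sa by simp_all
  have ex: "\<alpha> (psub xt (Fb f B)) = x" "\<alpha> (psub yt (Fb f B)) = y"
    unfolding xt_def yt_def x_def y_def by (simp_all only: alpha_xt)
  have ea: "\<alpha> (psub a (Fb f B)) = src X x" "\<alpha> (psub b (Fb f B)) = tgt X x"
    using SRC[OF wl gm td' fs] unfolding x_def by auto
  have eb: "\<alpha> (psub a (Fb f B)) = tgt X y"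
    using SRC[OF wl gm td' fs'] unfolding y_def by auto
  let ?T = "comptree n"
  let ?Sc = "Some (PVar (ssrc n (comptree n) (top n)), PVar (ttgt n (comptree n) (top n)))"
  let ?Gc = "\<lambda>p. if p \<in> poss (comptree n) then Some (cterm n xt yt a b p) else None"
  let ?Sd = "Some (PVar (top n), PVar (top n))"
  let ?Gd = "\<lambda>p. if p \<in> poss (disk n) then Some (dterm n a p) else None"
  define w where "w = PCoh ?T ?Sc ?Gc"
  define i where "i = PCoh (disk n) ?Sd ?Gd"
  have pgc: "pglob (wfp B) psrc ptgt ?T ?Gc" using PGC[OF wa wb _ wx wy sx] par by blast
  have pgd: "pglob (wfp B) psrc ptgt (disk n) ?Gd" using PGD[OF wa] .
  have ww: "wfp B (Suc n) w" unfolding w_def using SC pgc by (simp add: wfp_PCoh_iff)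
  have wi: "wfp B (Suc n) i" unfolding i_def using SD pgd by (simp add: wfp_PCoh_iff)
  have pz: "zp n (PZ 0) \<in> poss ?T" "zp n (PZ 2) \<in> poss ?T" "zp n (PS 0 (PZ 0)) \<in> poss ?T"
    unfolding poss_comptree by auto
  have pt: "top n \<in> poss (disk n)" using top_disk .
  have e1: "psrc w = a" "ptgt w = a" unfolding w_def using pz ssrc_comptree[of n] by simp_all
  have e2: "psrc i = a" "ptgt i = a" unfolding i_def using pt top_zp[of n] by simp_all
  have cw: "covers B (Suc n) w"
    unfolding covers_def
  proof
    fix p assume p: "p \<in> poss B"
    have "?Gc (zp n (PS 0 (PZ 0))) = Some xt" using pz by simp
    moreover have "p \<in> occ xt" unfolding xt_def using p by (auto simp: idp_def)
    ultimately have "p \<in> occ w" unfolding w_def occ_PCoh by blast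
    moreover have "w \<in> pbdries (Suc n) w" by simp
    ultimately show "p \<in> \<Union> (occ ` pbdries (Suc n) w)" by blast
  qed
  have ci: "covers B (Suc n) i"
  proof -
    have "pbdries n a \<subseteq> pbdries (Suc n) i" using e2 by auto
    then show ?thesis using cova unfolding covers_def by blast
  qed
  have fw: "full_sphere B (Suc (Suc n)) (Some (w, i))"
    using FS[OF td' ww wi _ cw ci] e1 e2 by simp
  have srcE: "src X (cohX \<alpha> B (Some (w, i)) f) = \<alpha> (psub w (Fb f B))"
   and tgtE: "tgt X (cohX \<alpha> B (Some (w, i)) f) = \<alpha> (psub i (Fb f B))"
    using SRC[OF wl gm _ fw] td by auto
  have "\<alpha> (psub w (Fb f B)) = \<alpha> (Coh ?T ?Sc (\<lambda>p. if p \<in> poss ?T then Some (Var (\<alpha> (psub (the (?Gc p)) (Fb f B)))) else None))"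
    unfolding w_def by (rule MONAD[OF wl gm _ SC pgc]) simp
  also have "(\<lambda>p. if p \<in> poss ?T then Some (Var (\<alpha> (psub (the (?Gc p)) (Fb f B)))) else None)
     = (\<lambda>p. if p \<in> poss ?T then Some (Var (compmap X n x y p)) else None)"
    using VALC[OF wl gm wa wb _ ex ea eb] par by (auto simp: fun_eq_iff)
  also have "\<alpha> (Coh ?T ?Sc (\<lambda>p. if p \<in> poss ?T then Some (Var (compmap X n x y p)) else None)) = comp X \<alpha> n x y"
    unfolding comp_def cohX_def map_tm_coh Fb_def ..
  finally have S: "src X (cohX \<alpha> B (Some (w, i)) f) = comp X \<alpha> n x y" using srcE by simp
  have "\<alpha> (psub i (Fb f B)) = \<alpha> (Coh (disk n) ?Sd (\<lambda>p. if p \<in> poss (disk n) then Some (Var (\<alpha> (psub (the (?Gd p)) (Fb f B)))) else None))"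
    unfolding i_def by (rule MONAD[OF wl gm _ SD pgd]) simp
  also have "(\<lambda>p. if p \<in> poss (disk n) then Some (Var (\<alpha> (psub (the (?Gd p)) (Fb f B)))) else None)
     = (\<lambda>p. if p \<in> poss (disk n) then Some (Var (diskmap X n (src X x) p)) else None)"
    using VALD[OF wl gm wa ea(1)] by (auto simp: fun_eq_iff)
  also have "\<alpha> (Coh (disk n) ?Sd (\<lambda>p. if p \<in> poss (disk n) then Some (Var (diskmap X n (src X x) p)) else None)) = idc X \<alpha> n (src X x)"
    unfolding idc_def cohX_def map_tm_coh Fb_def ..
  finally have T: "tgt X (cohX \<alpha> B (Some (w, i)) f) = idc X \<alpha> n (src X x)" using tgtE by simp
  show ?thesis using fw S T unfolding x_def y_def by blast
qed




theorem proposition3p4: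
  fixes B :: tree and n :: nat and A :: "(ptm \<times> ptm) option"
    and X :: "'a gset" and \<alpha> :: "'a tm \<Rightarrow> 'a" and f :: "pos \<Rightarrow> 'a"
  assumes "full_sphere B n A"
    and "tdim B < n"
    and "walg X \<alpha>"
    and "gmap (posG B) X f"
  shows "invertible X \<alpha> (cohX \<alpha> B A f)"
proof -
  note wl = assms(3)
  define P where "P = (\<lambda>z. \<exists>B A N f. z = cohX \<alpha> B A f \<and> full_sphere B N A \<and> tdim B < N \<and> gmap (posG B) X f)"
  have P0: "P (cohX \<alpha> B A f)" unfolding P_def using assms by blast
  show ?thesis
  proof (rule invertible.coinduct[where Xa = P, OF P0])
    fix z assume "P z"
    then obtain B A N f where z: "z = cohX \<alpha> B A f" and fs: "full_sphere B N A" and td: "tdim B < N"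
      and gm: "gmap (posG B) X f" unfolding P_def by blast
    obtain n where N: "N = Suc n" using td by (cases N) auto
    obtain a b where A: "A = Some (a, b)" using fullsph_Suc[of wfp B n A] fs N by blast
    have td': "tdim B \<le> n" using td N by simp
    have td'': "tdim B \<le> Suc n" using td N by simp
    have fab: "full_sphere B (Suc n) (Some (a, b))" using fs N A by simp
    note F = FSinv[OF td' fab]
    have fba: "full_sphere B (Suc n) (Some (b, a))" using FS[OF td'] F by auto
    define x where "x = cohX \<alpha> B (Some (a, b)) f"
    define y where "y = cohX \<alpha> B (Some (b, a)) f"
    obtain A1 where A1: "full_sphere B (Suc (Suc n)) A1" "src X (cohX \<alpha> B A1 f) = comp X \<alpha> n x y"
      "tgt X (cohX \<alpha> B A1 f) = idc X \<alpha> n (src X x)"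
      using ETA[OF wl gm td' fab] unfolding x_def y_def by blast
    obtain A2 where A2: "full_sphere B (Suc (Suc n)) A2" "src X (cohX \<alpha> B A2 f) = comp X \<alpha> n y x"
      "tgt X (cohX \<alpha> B A2 f) = idc X \<alpha> n (src X y)"
      using ETA[OF wl gm td' fba] unfolding x_def y_def by blast
    have sx: "src X x = \<alpha> (psub a (Fb f B))" "tgt X x = \<alpha> (psub b (Fb f B))"
      using SRC[OF wl gm td'' fab] unfolding x_def by auto
    have sy: "src X y = \<alpha> (psub b (Fb f B))" "tgt X y = \<alpha> (psub a (Fb f B))"
      using SRC[OF wl gm td'' fba] unfolding y_def by auto
    have cx: "x \<in> cells X (Suc n)" unfolding x_def using CELL[OF wl gm td'' fab] .
    have cy: "y \<in> cells X (Suc n)" unfolding y_def using CELL[OF wl gm td'' fba] .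
    have c1: "cohX \<alpha> B A1 f \<in> cells X (Suc (Suc n))" using CELL[OF wl gm _ A1(1)] td'' by simp
    have c2: "cohX \<alpha> B A2 f \<in> cells X (Suc (Suc n))" using CELL[OF wl gm _ A2(1)] td'' by simp
    have P1: "P (cohX \<alpha> B A1 f)" unfolding P_def using A1(1) gm td N by fastforce
    have P2: "P (cohX \<alpha> B A2 f)" unfolding P_def using A2(1) gm td N by fastforce
    have zx: "z = x" unfolding z x_def A ..
    show "\<exists>xa n xb \<eta> \<epsilon>.
        z = xa \<and>
        xa \<in> cells X (Suc n) \<and>
        xb \<in> cells X (Suc n) \<and>
        src X xb = tgt X xa \<and>
        tgt X xb = src X xa \<and>
        \<eta> \<in> cells X (Suc (Suc n)) \<and>
        \<epsilon> \<in> cells X (Suc (Suc n)) \<and>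
        src X \<eta> = Defs.comp X \<alpha> n xa xb \<and>
        tgt X \<eta> = idc X \<alpha> n (src X xa) \<and>
        src X \<epsilon> = Defs.comp X \<alpha> n xb xa \<and>
        tgt X \<epsilon> = idc X \<alpha> n (tgt X xa) \<and>
        (P \<eta> \<or> invertible X \<alpha> \<eta>) \<and> (P \<epsilon> \<or> invertible X \<alpha> \<epsilon>)"
      apply (rule exI[of _ z], rule exI[of _ n], rule exI[of _ y],
             rule exI[of _ "cohX \<alpha> B A1 f"], rule exI[of _ "cohX \<alpha> B A2 f"])
      using zx cx cy sx sy A1 A2 c1 c2 P1 P2 by auto
  qed
qed


end
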